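(* Let $q$ be a system of Beurling primes with Beurling integers $\{\nu_n\}_{n\geq1}$ and $\sigma_c(\zeta_q)<\infty$, and let $\varepsilon>0$ and $C_0=\sigma_c(\zeta_q)+\varepsilon$. Then for almost every $q'>1$ there are only finitely many triples $(j,n,m)\in\mathbb{N}^3$ such that $$\Bigl|(q')^j-\frac{\nu_n}{\nu_m}\Bigr|\leq \nu_n^{-C_0}\nu_m^{-C_0}.$$
   Context: A system of Beurling primes is an increasing sequence (finite or infinite) $q=\{q_n\}$ of real numbers with $q_n>1$ (and $q_n\to\infty$ if infinite) such that $\{\log q_n\}$ is linearly independent over $\mathbb{Q}$. The Beurling integers $\{\nu_n\}_{n\geq1}$ are all finite products of elements of $q$ (including $\nu_1=1$), listed in increasing order. $\zeta_q(s)=\sum_{n\geq1}\nu_n^{-s}$ and $\sigma_c(\zeta_q)$ is its abscissa of convergence. *)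

theory Defs
  imports "HOL-Analysis.Analysis"
begin

definition beurling_primes :: "nat set \<Rightarrow> (nat \<Rightarrow> real) \<Rightarrow> bool" where
  "beurling_primes I q \<longleftrightarrow>
     (I = UNIV \<or> (\<exists>N. I = {..<N})) \<and>
     strict_mono_on I q \<and>
     (\<forall>i\<in>I. q i > 1) \<and>
     (I = UNIV \<longrightarrow> filterlim q at_top sequentially) \<and>
     (\<forall>F (c :: nat \<Rightarrow> rat). finite F \<and> F \<subseteq> I \<and>
         (\<Sum>i\<in>F. of_rat (c i) * ln (q i)) = 0 \<longrightarrow> (\<forall>i\<in>F. c i = 0))"

definition beurling_integers :: "nat set \<Rightarrow> (nat \<Rightarrow> real) \<Rightarrow> real set" where
  "beurling_integers I q =
     {\<Prod>i\<in>F. q i ^ e i | F e. finite F \<and> F \<subseteq> I}"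

definition zeta_conv_set :: "nat set \<Rightarrow> (nat \<Rightarrow> real) \<Rightarrow> real set" where
  "zeta_conv_set I q = {\<sigma>. (\<lambda>x. x powr (-\<sigma>)) summable_on beurling_integers I q}"

definition sigma_c :: "nat set \<Rightarrow> (nat \<Rightarrow> real) \<Rightarrow> real" where
  "sigma_c I q = Inf (zeta_conv_set I q)"

end

theory Submission
  imports Defs
begin

lemma pow_diff_bound:
  fixes u v a :: real and j :: nat
  assumes "a \<ge> 1" "u \<ge> a" "v \<ge> a" "j \<ge> 1"
  shows "\<bar>u - v\<bar> * a ^ (j - 1) \<le> \<bar>u ^ j - v ^ j\<bar>"
proof -
  have key: "(u - v) * a ^ (j - 1) \<le> u ^ j - v ^ j" if "a \<le> v" "v \<le> u" for u v
  proof -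
    have "j = Suc (j - 1)" using assms by simp
    then have e: "u ^ j = u * u ^ (j-1)" "v ^ j = v * v ^ (j-1)"
      by (metis power_Suc)+
    have "v ^ (j-1) \<le> u ^ (j-1)" using that assms by (intro power_mono) auto
    then have "u * v ^ (j-1) \<le> u * u ^ (j-1)" using that assms by (intro mult_left_mono) auto
    moreover have "(u - v) * a ^ (j-1) \<le> (u - v) * v ^ (j-1)"
      using that assms by (intro mult_left_mono power_mono) auto
    ultimately show ?thesis unfolding e by (simp add: algebra_simps)
  qed
  show ?thesis
  proof (cases "v \<le> u")
    case True
    then show ?thesis using key[of v u] assms by (simp add: abs_if)
  next
    case False
    then have "u ^ j \<le> v ^ j" using assms by (intro power_mono) auto
    then show ?thesis using key[of u v] False assms by (simp add: abs_if)
  qed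
qed

lemma set_bound:
  fixes a r d :: real and j :: nat
  assumes "a > 1" "j \<ge> 1" "d \<ge> 0"
  defines "A \<equiv> {t::real. a \<le> t \<and> \<bar>t ^ j - r\<bar> \<le> d}"
  shows "A \<in> sets lborel" "emeasure lborel A < \<infinity>" "measure lborel A \<le> 4 * d / a ^ (j - 1)"
proof -
  show meas: "A \<in> sets lborel" unfolding A_def by measurable
  define R where "R = 2 * d / a ^ (j - 1)"
  have apos: "a ^ (j - 1) > 0" using assms by simp
  have R0: "R \<ge> 0" unfolding R_def using assms apos by simp
  have "emeasure lborel A < \<infinity> \<and> measure lborel A \<le> 4 * d / a ^ (j - 1)"
  proof (cases "A = {}")
    case True
    have "4 * d / a ^ (j - 1) \<ge> 0" using assms apos by simp
    then show ?thesis by (simp only: True emeasure_empty measure_empty) simp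
  next
    case False
    then obtain s where s: "s \<in> A" by blast
    have sub: "A \<subseteq> {s - R .. s + R}"
    proof
      fix t assume t: "t \<in> A"
      have h1: "\<bar>t ^ j - r\<bar> \<le> d" "\<bar>s ^ j - r\<bar> \<le> d" using s t by (auto simp: A_def)
      have "\<bar>t ^ j - s ^ j\<bar> \<le> 2 * d" using h1 by (smt (verit))
      moreover have "\<bar>t - s\<bar> * a ^ (j - 1) \<le> \<bar>t ^ j - s ^ j\<bar>"
        using s t assms unfolding A_def by (intro pow_diff_bound) auto
      ultimately have "\<bar>t - s\<bar> * a ^ (j - 1) \<le> 2 * d" by linarith
      then have "\<bar>t - s\<bar> \<le> R" unfolding R_def using apos by (simp add: field_simps)
      then show "t \<in> {s - R .. s + R}" by auto
    qed
    have fin: "emeasure lborel {s - R .. s + R} < \<infinity>" using R0 by (simp add: emeasure_lborel_Icc_eq)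
    have "emeasure lborel A \<le> emeasure lborel {s - R .. s + R}"
      using sub by (intro emeasure_mono) auto
    then have e1: "emeasure lborel A < \<infinity>" using fin by auto
    have "measure lborel A \<le> measure lborel {s - R .. s + R}"
      using sub meas fin by (intro measure_mono_fmeasurable) (auto simp: fmeasurable_def)
    also have "\<dots> = 2 * R" using R0 by simp
    also have "\<dots> = 4 * d / a ^ (j - 1)" unfolding R_def by simp
    finally show ?thesis using e1 by simp
  qed
  then show "emeasure lborel A < \<infinity>" "measure lborel A \<le> 4 * d / a ^ (j - 1)" by auto
qed

lemma bp_gt1: "beurling_primes I q \<Longrightarrow> i \<in> I \<Longrightarrow> q i > 1"
  by (simp add: beurling_primes_def)

lemma B_ge1:
  assumes "beurling_primes I q" "x \<in> beurling_integers I q"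
  shows "x \<ge> 1"
proof -
  obtain F e where x: "x = (\<Prod>i\<in>F. q i ^ e i)" "finite F" "F \<subseteq> I"
    using assms(2) unfolding beurling_integers_def by blast
  have q1: "\<And>i. i \<in> I \<Longrightarrow> q i > 1" using assms(1) by (rule bp_gt1)
  have "1 \<le> (\<Prod>i\<in>F. q i ^ e i)"
  proof (rule prod_ge_1)
    fix i assume "i \<in> F"
    then have "1 \<le> q i" using q1 x(3) by (meson less_imp_le subsetD)
    then show "1 \<le> q i ^ e i" by (rule one_le_power)
  qed
  then show ?thesis using x(1) by simp
qed

lemma B_one: "1 \<in> beurling_integers I q"
proof -
  show ?thesis unfolding beurling_integers_def
    by (rule CollectI, rule exI[of _ "{}"], rule exI[of _ "\<lambda>_. 0::nat"]) simp
qed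

lemma prod_as_list:
  assumes "finite F"
  shows "\<exists>l. (\<Prod>i\<in>F. q i ^ e i) = prod_list (map q l)"
  using assms
proof (induction F rule: finite_induct)
  case empty
  then show ?case by (intro exI[of _ "[]"]) simp
next
  case (insert x F)
  then obtain l where l: "(\<Prod>i\<in>F. q i ^ e i) = prod_list (map q l)" by blast
  have "(\<Prod>i\<in>insert x F. q i ^ e i) = prod_list (map q (replicate (e x) x @ l))"
    using insert l by (simp add: prod_list_replicate)
  then show ?case by blast
qed

lemma B_countable: "countable (beurling_integers I q)"
proof -
  have "beurling_integers I q \<subseteq> (\<lambda>l. prod_list (map q l)) ` UNIV"
  proof
    fix x assume "x \<in> beurling_integers I q"
    then obtain F e where x: "x = (\<Prod>i\<in>F. q i ^ e i)" "finite F"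
      unfolding beurling_integers_def by blast
    obtain l where "(\<Prod>i\<in>F. q i ^ e i) = prod_list (map q l)" using prod_as_list[OF x(2)] by blast
    then show "x \<in> (\<lambda>l. prod_list (map q l)) ` UNIV" using x by auto
  qed
  then show ?thesis by (rule countable_subset) simp
qed

lemma B_infinite:
  assumes "beurling_primes I q" "I \<noteq> {}"
  shows "infinite (beurling_integers I q)"
proof -
  obtain i0 where i0: "i0 \<in> I" using assms(2) by blast
  have q1: "q i0 > 1" using assms(1) i0 by (rule bp_gt1)
  have sub: "range (\<lambda>n. q i0 ^ n) \<subseteq> beurling_integers I q"
  proof
    fix y assume "y \<in> range (\<lambda>n. q i0 ^ n)"
    then obtain n where y: "y = q i0 ^ n" by blast
    show "y \<in> beurling_integers I q" unfolding beurling_integers_def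
      by (rule CollectI, rule exI[of _ "{i0}"], rule exI[of _ "\<lambda>_. n"]) (use y i0 in simp)
  qed
  have "strict_mono (\<lambda>n. q i0 ^ n)" using q1 by (intro strict_monoI power_strict_increasing) auto
  then have "inj (\<lambda>n. q i0 ^ n)" by (rule strict_mono_imp_inj_on)
  then have "infinite (range (\<lambda>n. q i0 ^ n))" using finite_imageD by blast
  then show ?thesis using sub finite_subset by blast
qed

lemma summable_const_infinite:
  fixes B :: "'a set"
  assumes "(\<lambda>_. 1::real) summable_on B"
  shows "finite B"
proof (rule ccontr)
  assume inf: "infinite B"
  obtain C where C: "\<forall>\<^sub>F X in finite_subsets_at_top B. sum (\<lambda>_. 1::real) X \<le> C"
    using summable_on_imp_bounded_partial_sums[OF assms] by blast
  from C[unfolded eventually_finite_subsets_at_top] obtain X0 where X0: "finite X0" "X0 \<subseteq> B"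
    and X0': "\<forall>Y. finite Y \<and> X0 \<subseteq> Y \<and> Y \<subseteq> B \<longrightarrow> sum (\<lambda>_. 1::real) Y \<le> C"
    by blast
  obtain Y where Y: "Y \<subseteq> B" "finite Y" "card Y = nat (ceiling C) + 1"
    using infinite_arbitrarily_large[OF inf] by blast
  have fU: "finite (X0 \<union> Y)" using X0 Y by simp
  have "sum (\<lambda>_. 1::real) (X0 \<union> Y) \<le> C" using X0' fU X0(2) Y(1) by blast
  then have c1: "real (card (X0 \<union> Y)) \<le> C" by simp
  have "card Y \<le> card (X0 \<union> Y)" using fU by (intro card_mono) auto
  then have "real (nat (ceiling C) + 1) \<le> C" using Y(3) c1 by linarith
  then show False by linarith
qed

lemma zeta_pos:
  assumes "beurling_primes I q" "I \<noteq> {}" "\<sigma> \<in> zeta_conv_set I q"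
  shows "\<sigma> > 0"
proof (rule ccontr)
  assume "\<not> \<sigma> > 0"
  then have s: "-\<sigma> \<ge> 0" by simp
  have sum: "(\<lambda>x. x powr (-\<sigma>)) summable_on beurling_integers I q"
    using assms(3) unfolding zeta_conv_set_def by blast
  have "(\<lambda>_. 1::real) summable_on beurling_integers I q"
    using sum by (rule summable_on_comparison_test)
       (use B_ge1[OF assms(1)] s in \<open>auto intro: ge_one_powr_ge_zero\<close>)
  then show False using summable_const_infinite B_infinite[OF assms(1,2)] by blast
qed

lemma summable_C0:
  assumes "beurling_primes I q" "I \<noteq> {}" "zeta_conv_set I q \<noteq> {}" "C > sigma_c I q"
  shows "(\<lambda>x. x powr (-C)) summable_on beurling_integers I q"
proof -
  have bdd: "bdd_below (zeta_conv_set I q)"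
    using zeta_pos[OF assms(1,2)] by (intro bdd_belowI[of _ 0]) (auto intro: less_imp_le)
  obtain \<sigma> where \<sigma>: "\<sigma> \<in> zeta_conv_set I q" "\<sigma> < C"
    using assms(3,4) cInf_less_iff[OF assms(3) bdd] unfolding sigma_c_def by blast
  have sum: "(\<lambda>x. x powr (-\<sigma>)) summable_on beurling_integers I q"
    using \<sigma>(1) unfolding zeta_conv_set_def by blast
  show ?thesis
    using sum by (rule summable_on_comparison_test)
       (use B_ge1[OF assms(1)] \<sigma>(2) in \<open>auto intro: powr_mono\<close>)
qed

lemma fixed_a:
  assumes bp: "beurling_primes I q" and ne: "I \<noteq> {}"
    and sumw: "(\<lambda>x. x powr (-C)) summable_on beurling_integers I q" and a: "a > 1"
  shows "AE q' in lborel. a \<le> q' \<longrightarrow>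
           finite {(j :: nat, x :: real, y :: real).
                     j \<ge> 1 \<and> x \<in> beurling_integers I q \<and> y \<in> beurling_integers I q \<and>
                     \<bar>q' ^ j - x / y\<bar> \<le> x powr (-C) * y powr (-C)}"
proof -
  define B where "B = beurling_integers I q"
  define T where "T = {1::nat..} \<times> (B \<times> B)"
  define g where "g = from_nat_into T"
  define w where "w x = x powr (-C)" for x :: real
  define E where "E t = {t'. a \<le> t' \<and> \<bar>t' ^ (fst t) - fst (snd t) / snd (snd t)\<bar> \<le> w (fst (snd t)) * w (snd (snd t))}"
    for t :: "nat \<times> real \<times> real"
  define A where "A n = E (g n)" for n
  define h where "h t = 4 * a * (1/a) ^ (fst t) * (w (fst (snd t)) * w (snd (snd t)))"
    for t :: "nat \<times> real \<times> real"
  have B1: "1 \<in> B" unfolding B_def by (rule B_one)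
  have cB: "countable B" unfolding B_def by (rule B_countable)
  have cT: "countable T" unfolding T_def using cB by auto
  have iT: "infinite T"
  proof
    assume "finite T"
    moreover have "B \<times> B \<noteq> {}" using B1 by blast
    ultimately have "finite {1::nat..}" unfolding T_def by (rule finite_cartesian_productD1)
    then show False using infinite_Ici by blast
  qed
  have bij: "bij_betw g UNIV T" unfolding g_def by (rule bij_betw_from_nat_into[OF cT iT])
  have wnn: "w x \<ge> 0" for x unfolding w_def by simp
  have Esets: "E t \<in> sets lborel" "emeasure lborel (E t) < \<infinity>"
    "measure lborel (E t) \<le> 4 * (w (fst (snd t)) * w (snd (snd t))) / a ^ (fst t - 1)"
    if "fst t \<ge> 1" for t
    unfolding E_def using set_bound[OF a that, of "w (fst (snd t)) * w (snd (snd t))" "fst (snd t) / snd (snd t)"]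
      wnn by auto
  have mh: "measure lborel (E t) \<le> h t" if "t \<in> T" for t
  proof -
    obtain j x y where t: "t = (j, x, y)" by (cases t) auto
    have j: "j \<ge> 1" using that t unfolding T_def by auto
    have "a ^ j = a * a ^ (j - 1)" using j by (metis Suc_diff_1 less_le_trans zero_less_one power_Suc)
    then have "4 * (w x * w y) / a ^ (j - 1) = h t"
      unfolding h_def t using a by (simp add: field_simps power_one_over)
    then show ?thesis using Esets(3)[of t] t j by simp
  qed
  have hsum: "h summable_on T"
  proof -
    define W where "W = infsum w B"
    have wsum: "w summable_on B" using sumw unfolding w_def B_def by simp
    have P: "(\<lambda>(x, y). w x * w y) summable_on (B \<times> B)"
    proof (rule summable_on_SigmaI[where g = "\<lambda>x. w x * W"])
      show "((\<lambda>y. (\<lambda>(x, y). w x * w y) (x, y)) has_sum w x * W) B" if "x \<in> B" for x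
        using has_sum_cmult_right[OF has_sum_infsum[OF wsum], of "w x"] unfolding W_def by simp
      show "(\<lambda>x. w x * W) summable_on B" using wsum by (rule summable_on_cmult_left)
      show "0 \<le> (\<lambda>(x, y). w x * w y) (x, y)" for x y using wnn by simp
    qed
    define W2 where "W2 = infsum (\<lambda>(x, y). w x * w y) (B \<times> B)"
    have gsum: "(\<lambda>j::nat. 4 * a * (1/a) ^ j) summable_on {1..}"
    proof -
      have "summable (\<lambda>j::nat. 4 * a * (1/a) ^ j)"
        using a by (intro summable_mult summable_geometric) auto
      then have "(\<lambda>j::nat. 4 * a * (1/a) ^ j) summable_on UNIV"
        using a by (subst summable_on_UNIV_nonneg_real_iff) auto
      then show ?thesis by (rule summable_on_subset_banach) auto
    qed
    have "(\<lambda>(j, p). 4 * a * (1/a) ^ j * (\<lambda>(x, y). w x * w y) p) summable_on {1::nat..} \<times> (B \<times> B)"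
    proof (rule summable_on_SigmaI[where g = "\<lambda>j. 4 * a * (1/a) ^ j * W2"])
      show "((\<lambda>p. (\<lambda>(j, p). 4 * a * (1/a) ^ j * (\<lambda>(x, y). w x * w y) p) (j, p)) has_sum 4 * a * (1/a) ^ j * W2) (B \<times> B)" if "j \<in> {1..}" for j
        using has_sum_cmult_right[OF has_sum_infsum[OF P], of "4 * a * (1/a) ^ j"] unfolding W2_def by simp
      show "(\<lambda>j. 4 * a * (1/a) ^ j * W2) summable_on {1..}" using gsum by (rule summable_on_cmult_left)
      show "0 \<le> (\<lambda>(j, p). 4 * a * (1/a) ^ j * (\<lambda>(x, y). w x * w y) p) (j, p)" for j p
        using wnn a by (cases p) auto
    qed
    moreover have "(\<lambda>(j, p). 4 * a * (1/a) ^ j * (\<lambda>(x, y). w x * w y) p) = h"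
      unfolding h_def by (auto simp: fun_eq_iff)
    ultimately show ?thesis unfolding T_def by simp
  qed
  have "(\<lambda>n. h (g n)) summable_on UNIV"
    using hsum summable_on_reindex_bij_betw[OF bij, of h] by simp
  moreover have hnn: "h t \<ge> 0" for t unfolding h_def using a wnn by simp
  ultimately have "summable (\<lambda>n. h (g n))" using summable_on_UNIV_nonneg_real_iff[of "\<lambda>n. h (g n)"] by simp
  then have sumA: "summable (\<lambda>n. measure lborel (A n))"
  proof (rule summable_comparison_test')
    fix n :: nat
    have "g n \<in> T" using bij by (auto simp: bij_betw_def)
    then show "norm (measure lborel (A n)) \<le> h (g n)" unfolding A_def using mh by simp
  qed
  have gT: "g n \<in> T" for n using bij by (auto simp: bij_betw_def)
  have fstg: "fst (g n) \<ge> 1" for n using gT[of n] unfolding T_def by auto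
  have "AE x in lborel. eventually (\<lambda>n. x \<in> space lborel - A n) sequentially"
  proof (rule borel_cantelli_AE1)
    fix n show "A n \<in> sets lborel" unfolding A_def by (rule Esets(1)[OF fstg])
    show "emeasure lborel (A n) < \<infinity>" unfolding A_def by (rule Esets(2)[OF fstg])
  next
    show "summable (\<lambda>n. measure lborel (A n))" by (rule sumA)
  qed
  then show ?thesis
  proof (rule AE_mp, intro AE_I2 impI)
    fix x assume ev: "eventually (\<lambda>n. x \<in> space lborel - A n) sequentially" and ax: "a \<le> x"
    then obtain N where N: "\<And>n. n \<ge> N \<Longrightarrow> x \<notin> A n" by (auto simp: eventually_sequentially)
    have fin: "finite {n. x \<in> A n}"
      by (rule finite_subset[of _ "{..<N}"]) (use N not_less in auto)
    have "{(j :: nat, y :: real, z :: real).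
                     j \<ge> 1 \<and> y \<in> beurling_integers I q \<and> z \<in> beurling_integers I q \<and>
                     \<bar>x ^ j - y / z\<bar> \<le> y powr (-C) * z powr (-C)} \<subseteq> g ` {n. x \<in> A n}"
    proof
      fix t assume t: "t \<in> {(j :: nat, y :: real, z :: real).
                     j \<ge> 1 \<and> y \<in> beurling_integers I q \<and> z \<in> beurling_integers I q \<and>
                     \<bar>x ^ j - y / z\<bar> \<le> y powr (-C) * z powr (-C)}"
      obtain j y z where tt: "t = (j, y, z)" by (cases t) auto
      have tT: "t \<in> T" using t tt unfolding T_def B_def by auto
      have xE: "x \<in> E t" using t tt ax unfolding E_def w_def by auto
      have gi: "g (inv_into UNIV g t) = t"
        using bij tT by (intro f_inv_into_f) (auto simp: bij_betw_def)
      then have "x \<in> A (inv_into UNIV g t)" unfolding A_def using xE by simp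
      then show "t \<in> g ` {n. x \<in> A n}" using gi by (metis (mono_tags) image_eqI mem_Collect_eq)
    qed
    then show "finite {(j :: nat, y :: real, z :: real).
                     j \<ge> 1 \<and> y \<in> beurling_integers I q \<and> z \<in> beurling_integers I q \<and>
                     \<bar>x ^ j - y / z\<bar> \<le> y powr (-C) * z powr (-C)}"
      using fin by (rule finite_subset[OF _ finite_imageI])
  qed
qed

theorem mainTheorem3:
  fixes I :: "nat set" and q :: "nat \<Rightarrow> real" and \<epsilon> C\<^sub>0 :: real
  assumes "beurling_primes I q"
    and "I \<noteq> {}"
    and "zeta_conv_set I q \<noteq> {}"
    and "\<epsilon> > 0"
    and "C\<^sub>0 = sigma_c I q + \<epsilon>"
  shows "AE q' in lborel. q' > 1 \<longrightarrow>
           finite {(j :: nat, x :: real, y :: real).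
                     j \<ge> 1 \<and> x \<in> beurling_integers I q \<and> y \<in> beurling_integers I q \<and>
                     \<bar>q' ^ j - x / y\<bar> \<le> x powr (-C\<^sub>0) * y powr (-C\<^sub>0)}"
proof -
  have sumw: "(\<lambda>x. x powr (-C\<^sub>0)) summable_on beurling_integers I q"
    using assms by (intro summable_C0) auto
  have "\<forall>k::nat. AE q' in lborel. 1 + inverse (real (Suc k)) \<le> q' \<longrightarrow>
           finite {(j :: nat, x :: real, y :: real).
                     j \<ge> 1 \<and> x \<in> beurling_integers I q \<and> y \<in> beurling_integers I q \<and>
                     \<bar>q' ^ j - x / y\<bar> \<le> x powr (-C\<^sub>0) * y powr (-C\<^sub>0)}"
  proof
    fix k :: nat
    have "1 + inverse (real (Suc k)) > 1" by simp
    then show "AE q' in lborel. 1 + inverse (real (Suc k)) \<le> q' \<longrightarrow>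
           finite {(j :: nat, x :: real, y :: real).
                     j \<ge> 1 \<and> x \<in> beurling_integers I q \<and> y \<in> beurling_integers I q \<and>
                     \<bar>q' ^ j - x / y\<bar> \<le> x powr (-C\<^sub>0) * y powr (-C\<^sub>0)}"
      by (rule fixed_a[OF assms(1,2) sumw])
  qed
  then have "AE q' in lborel. \<forall>k::nat. 1 + inverse (real (Suc k)) \<le> q' \<longrightarrow>
           finite {(j :: nat, x :: real, y :: real).
                     j \<ge> 1 \<and> x \<in> beurling_integers I q \<and> y \<in> beurling_integers I q \<and>
                     \<bar>q' ^ j - x / y\<bar> \<le> x powr (-C\<^sub>0) * y powr (-C\<^sub>0)}"
    by (subst AE_all_countable)
  then show ?thesis
  proof (rule AE_mp, intro AE_I2 impI)
    fix q' :: real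
    assume H: "\<forall>k::nat. 1 + inverse (real (Suc k)) \<le> q' \<longrightarrow>
           finite {(j :: nat, x :: real, y :: real).
                     j \<ge> 1 \<and> x \<in> beurling_integers I q \<and> y \<in> beurling_integers I q \<and>
                     \<bar>q' ^ j - x / y\<bar> \<le> x powr (-C\<^sub>0) * y powr (-C\<^sub>0)}" and q1: "q' > 1"
    obtain k where "inverse (real (Suc k)) < q' - 1" using reals_Archimedean[of "q' - 1"] q1 by auto
    then have "1 + inverse (real (Suc k)) \<le> q'" by simp
    then show "finite {(j :: nat, x :: real, y :: real).
                     j \<ge> 1 \<and> x \<in> beurling_integers I q \<and> y \<in> beurling_integers I q \<and>
                     \<bar>q' ^ j - x / y\<bar> \<le> x powr (-C\<^sub>0) * y powr (-C\<^sub>0)}" using H by blast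
  qed
qed

end
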